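(* Fix $\alpha\in(0,1)$, integers $d\ge1$, $b\ge2$, $0\le t\le m$, $n=b^m$, and a parameter set $\Theta\subset\mathbb{R}$ with measurable functions $g_\theta:(0,1)^d\to\mathbb{R}$, $\theta\in\Theta$. Assume that for every $\theta\in\Theta$, $g_\theta(\boldsymbol u)$ is a continuous random variable whenever $d-1$ components of $\boldsymbol u$ are fixed and the remaining component is uniformly distributed over an open interval in $(0,1)$. Fix $\theta\in\Theta$, let $v_\alpha=\inf\{y:\mathbb{P}(g_\theta(\boldsymbol u)\le y)\ge\alpha\}$ for $\boldsymbol u\sim\mathrm{Unif}((0,1)^d)$, let $\boldsymbol u_1,\dots,\boldsymbol u_n$ be a scrambled $(t,m,d)$-net in base $b$, $L_i=g_\theta(\boldsymbol u_i)$, $\hat F_n(y)=\frac1n\sum_{i=1}^n\mathbf 1\{L_i\le y\}$ and $\hat v_{\alpha,n}=\inf\{y:\hat F_n(y)\ge\alpha\}$. Then with probability one, $$\big|\hat F_n(\hat v_{\alpha,n})-\hat F_n(v_\alpha)\big|\le\frac{b^t}{n}+\big|\hat F_n(v_\alpha)-\alpha\big|.$$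
   Context: An elementary interval in base $b$ is a set $\prod_{j=1}^d[t_j b^{-k_j},(t_j+1)b^{-k_j})$ with nonnegative integers $k_j$ and $0\le t_j<b^{k_j}$. A finite sequence $\boldsymbol u_1,\dots,\boldsymbol u_{b^m}\in[0,1)^d$ is a $(t,m,d)$-net in base $b$ if every elementary interval in base $b$ of volume $b^{t-m}$ contains exactly $b^t$ of the points. A scrambled net is obtained from a $(t,m,d)$-net by Owen's nested uniform scrambling: writing each coordinate $u_i^j=\sum_{k\ge1}a_{ijk}b^{-k}$ in base $b$, the scrambled coordinate is $\tilde u_i^j=\sum_{k\ge1}\tilde a_{ijk}b^{-k}$ with $\tilde a_{ijk}=\pi_{j a_{ij1}\cdots a_{ij,k-1}}(a_{ijk})$ (for $k=1$, $\pi_j(a_{ij1})$), where the permutations $\pi_\bullet$ are mutually independent and each uniformly distributed over the permutations of $\{0,\dots,b-1\}$. *)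

theory Defs
  imports "HOL-Probability.Probability" "HOL-Combinatorics.Permutations"
begin

definition elem_interval :: "nat \<Rightarrow> ('d::finite \<Rightarrow> nat) \<Rightarrow> ('d \<Rightarrow> nat) \<Rightarrow> (real^'d) set" where
  "elem_interval b k T =
     {x. \<forall>j. real (T j) / real b ^ k j \<le> x $ j \<and> x $ j < (real (T j) + 1) / real b ^ k j}"

definition is_tmd_net :: "nat \<Rightarrow> nat \<Rightarrow> nat \<Rightarrow> (nat \<Rightarrow> real^'d::finite) \<Rightarrow> bool" where
  "is_tmd_net b t m u \<longleftrightarrow>
     (\<forall>i < b ^ m. \<forall>j. 0 \<le> u i $ j \<and> u i $ j < 1) \<and>
     (\<forall>k T. (\<forall>j. T j < b ^ k j) \<and> (\<Sum>j\<in>UNIV. k j) = m - t \<longrightarrow>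
        card {i. i < b ^ m \<and> u i \<in> elem_interval b k T} = b ^ t)"

text \<open>k-th base-b digit (k \<ge> 1) of x in [0,1): x = sum_{k\<ge>1} a_k b^{-k}.\<close>
definition digit :: "nat \<Rightarrow> real \<Rightarrow> nat \<Rightarrow> nat" where
  "digit b x k = nat \<lfloor>x * real b ^ k\<rfloor> mod b"

definition digit_prefix :: "nat \<Rightarrow> real \<Rightarrow> nat \<Rightarrow> nat list" where
  "digit_prefix b x k = map (digit b x) [1..<k]"

text \<open>Owen's nested scrambling of one coordinate, given the family of permutations
  p :: nat list \<Rightarrow> nat \<Rightarrow> nat (indexed by the digit prefix) for that coordinate.\<close>
definition scramble_coord :: "nat \<Rightarrow> (nat list \<Rightarrow> nat \<Rightarrow> nat) \<Rightarrow> real \<Rightarrow> real" where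
  "scramble_coord b p x =
     (\<Sum>k. real (p (digit_prefix b x (Suc k)) (digit b x (Suc k))) / real b ^ Suc k)"

definition scramble_point :: "nat \<Rightarrow> ('d::finite \<times> nat list \<Rightarrow> nat \<Rightarrow> nat) \<Rightarrow> real^'d \<Rightarrow> real^'d" where
  "scramble_point b \<sigma> x = (\<chi> j. scramble_coord b (\<lambda>ds. \<sigma> (j, ds)) (x $ j))"

definition scramble_space :: "nat \<Rightarrow> ('d::finite \<times> nat list \<Rightarrow> nat \<Rightarrow> nat) measure" where
  "scramble_space b = PiM UNIV (\<lambda>_. measure_pmf (pmf_of_set {p. p permutes {0..<b}}))"

definition emp_cdf :: "nat \<Rightarrow> (nat \<Rightarrow> real) \<Rightarrow> real \<Rightarrow> real" where
  "emp_cdf n L y = real (card {i. i < n \<and> L i \<le> y}) / real n"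

end

theory Submission
  imports Defs
begin

definition Perms :: "nat \<Rightarrow> (nat \<Rightarrow> nat) set" where
  "Perms b = {p. p permutes {0..<b}}"

lemma Perms_finite: "finite (Perms b)"
  unfolding Perms_def by (rule finite_permutations) simp

lemma Perms_ne: "Perms b \<noteq> {}"
  unfolding Perms_def using permutes_id by blast

lemma Perms_lt: "p \<in> Perms b \<Longrightarrow> e < b \<Longrightarrow> p e < b"
  unfolding Perms_def using permutes_in_image by fastforce

definition clip :: "nat \<Rightarrow> nat \<Rightarrow> nat" where "clip b n = min n (b - 1)"

lemma tr_perm: "p \<in> Perms b \<Longrightarrow> q < b \<Longrightarrow> q' < b \<Longrightarrow> Transposition.transpose q q' \<circ> p \<in> Perms b"
  unfolding Perms_def mem_Collect_eq
  by (rule permutes_compose, assumption, rule permutes_swap_id, auto)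

lemma card_Perms_fix:
  assumes e: "e < b" and q: "q < b" and q': "q' < b"
  shows "card {p \<in> Perms b. p e = q} = card {p \<in> Perms b. p e = q'}"
proof -
  have "bij_betw (\<lambda>p. Transposition.transpose q q' \<circ> p) {p \<in> Perms b. p e = q} {p \<in> Perms b. p e = q'}"
  proof (rule bij_betw_byWitness[where f' = "\<lambda>p. Transposition.transpose q q' \<circ> p"])
    show "\<forall>a\<in>{p \<in> Perms b. p e = q}. (Transposition.transpose q q' \<circ> (Transposition.transpose q q' \<circ> a)) = a"
      by (simp add: fun_eq_iff)
    show "\<forall>a\<in>{p \<in> Perms b. p e = q'}. (Transposition.transpose q q' \<circ> (Transposition.transpose q q' \<circ> a)) = a"
      by (simp add: fun_eq_iff)
    show "(\<lambda>p. Transposition.transpose q q' \<circ> p) ` {p \<in> Perms b. p e = q} \<subseteq> {p \<in> Perms b. p e = q'}"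
      using q q' by (auto intro!: tr_perm)
    show "(\<lambda>p. Transposition.transpose q q' \<circ> p) ` {p \<in> Perms b. p e = q'} \<subseteq> {p \<in> Perms b. p e = q}"
      using q q' by (auto intro!: tr_perm)
  qed
  then show ?thesis by (rule bij_betw_same_card)
qed

lemma card_Perms_fix':
  assumes e: "e < b" and q: "q < b"
  shows "real (card {p \<in> Perms b. p e = q}) = real (card (Perms b)) / real b"
proof -
  have U: "(\<Union>q'\<in>{..<b}. {p \<in> Perms b. p e = q'}) = Perms b"
    using Perms_lt[OF _ e] by auto
  have "card (\<Union>q'\<in>{..<b}. {p \<in> Perms b. p e = q'}) = (\<Sum>q'<b. card {p \<in> Perms b. p e = q'})"
    by (rule card_UN_disjoint) (auto intro: finite_subset[OF _ Perms_finite])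
  then have "card (Perms b) = (\<Sum>q'<b. card {p \<in> Perms b. p e = q'})"
    unfolding U .
  also have "\<dots> = (\<Sum>q'<b. card {p \<in> Perms b. p e = q})"
    by (intro sum.cong refl card_Perms_fix[OF e]) (auto simp: q)
  also have "\<dots> = b * card {p \<in> Perms b. p e = q}" by simp
  finally have "real (card (Perms b)) = real b * real (card {p \<in> Perms b. p e = q})"
    by (simp only: of_nat_mult[symmetric])
  then show ?thesis using q by simp
qed

lemma measure_perm_digit:
  assumes e: "e < b" and q: "q < b"
  shows "measure (measure_pmf (pmf_of_set (Perms b))) {p. clip b (p e) = q} = 1 / real b"
proof -
  have eq: "Perms b \<inter> {p. clip b (p e) = q} = {p \<in> Perms b. p e = q}"
    by (auto simp: clip_def min_def dest: Perms_lt[OF _ e])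
  have pos: "real (card (Perms b)) > 0"
    using Perms_ne[of b] Perms_finite[of b] by (simp add: card_gt_0_iff)
  have "measure (measure_pmf (pmf_of_set (Perms b))) {p. clip b (p e) = q}
     = real (card (Perms b \<inter> {p. clip b (p e) = q})) / real (card (Perms b))"
    by (rule measure_pmf_of_set[OF Perms_ne Perms_finite])
  also have "\<dots> = real (card {p \<in> Perms b. p e = q}) / real (card (Perms b))"
    unfolding eq ..
  also have "\<dots> = (real (card (Perms b)) / real b) / real (card (Perms b))"
    unfolding card_Perms_fix'[OF e q] ..
  also have "\<dots> = 1 / real b" using pos by simp
  finally show ?thesis .
qed

definition dsum :: "nat \<Rightarrow> (nat \<Rightarrow> nat) \<Rightarrow> real" where
  "dsum b f = (\<Sum>k. real (clip b (f k)) / real b ^ Suc k)"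

primrec dval :: "nat \<Rightarrow> (nat \<Rightarrow> nat) \<Rightarrow> nat \<Rightarrow> nat" where
  "dval b f 0 = 0"
| "dval b f (Suc k) = b * dval b f k + clip b (f k)"

lemma clip_lt: "0 < b \<Longrightarrow> clip b n < b"
  by (simp add: clip_def)

lemma clip_id: "n < b \<Longrightarrow> clip b n = n"
  by (simp add: clip_def)

lemma dsum_term_le:
  assumes "2 \<le> b"
  shows "real (clip b n) / real b ^ Suc k \<le> (real b - 1) / real b ^ Suc k"
proof -
  have "clip b n \<le> b - 1" by (simp add: clip_def)
  then have "real (clip b n) \<le> real b - 1" using assms by linarith
  then show ?thesis by (simp add: divide_right_mono)
qed

lemma summable_geo_b:
  assumes "2 \<le> b"
  shows "summable (\<lambda>k. (real b - 1) / real b ^ Suc k)"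
    and "(\<Sum>k. (real b - 1) / real b ^ Suc k) = 1"
proof -
  have eq: "(\<lambda>k. (real b - 1) / real b ^ Suc k) = (\<lambda>k. ((real b - 1) / real b) * (1 / real b) ^ k)"
    by (simp add: power_one_over field_simps)
  have lt: "norm (1 / real b) < 1" using assms by simp
  show "summable (\<lambda>k. (real b - 1) / real b ^ Suc k)"
    unfolding eq by (intro summable_mult summable_geometric lt)
  have "(\<Sum>k. ((real b - 1) / real b) * (1 / real b) ^ k) = ((real b - 1) / real b) * (1 / (1 - 1 / real b))"
    by (subst suminf_mult[OF summable_geometric[OF lt]]) (subst suminf_geometric[OF lt], rule refl)
  also have "\<dots> = 1" using assms by (simp add: field_simps)
  finally show "(\<Sum>k. (real b - 1) / real b ^ Suc k) = 1" unfolding eq .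
qed

lemma summable_dsum:
  assumes "2 \<le> b"
  shows "summable (\<lambda>k. real (clip b (f k)) / real b ^ Suc k)"
  by (rule summable_comparison_test'[OF summable_geo_b(1)[OF assms], of 0])
     (use dsum_term_le[OF assms] in auto)

lemma dsum_nonneg: "0 \<le> dsum b f" if "2 \<le> b"
  unfolding dsum_def using that by (intro suminf_nonneg summable_dsum) auto

lemma dsum_le1: "dsum b f \<le> 1" if "2 \<le> b"
proof -
  have "dsum b f \<le> (\<Sum>k. (real b - 1) / real b ^ Suc k)"
    unfolding dsum_def using that
    by (intro suminf_le summable_dsum summable_geo_b dsum_term_le) auto
  then show ?thesis using summable_geo_b(2)[OF that] by simp
qed

lemma dval_partial:
  assumes "0 < b"
  shows "(\<Sum>k<K. real (clip b (f k)) / real b ^ Suc k) = real (dval b f K) / real b ^ K"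
proof (induction K)
  case 0 then show ?case by simp
next
  case (Suc K)
  then show ?case using assms by (simp add: field_simps)
qed

lemma dsum_split:
  assumes "2 \<le> b"
  shows "dsum b f = (\<Sum>k<K. real (clip b (f k)) / real b ^ Suc k) + dsum b (\<lambda>k. f (k + K)) / real b ^ K"
proof -
  have s: "summable (\<lambda>k. real (clip b (f k)) / real b ^ Suc k)" by (rule summable_dsum[OF assms])
  have "dsum b f = (\<Sum>k. real (clip b (f (k + K))) / real b ^ Suc (k + K)) + (\<Sum>k<K. real (clip b (f k)) / real b ^ Suc k)"
    unfolding dsum_def by (rule suminf_split_initial_segment[OF s])
  also have "(\<Sum>k. real (clip b (f (k + K))) / real b ^ Suc (k + K)) = (\<Sum>k. real (clip b (f (k + K))) / real b ^ Suc k) / real b ^ K"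
    by (subst suminf_divide[OF summable_dsum[OF assms], symmetric]) (simp add: power_add field_simps)
  finally show ?thesis by (simp add: dsum_def)
qed

lemma dsum_bounds:
  assumes "2 \<le> b"
  shows "real (dval b f K) / real b ^ K \<le> dsum b f"
    and "dsum b f \<le> (real (dval b f K) + 1) / real b ^ K"
proof -
  have e: "dsum b f = real (dval b f K) / real b ^ K + dsum b (\<lambda>k. f (k + K)) / real b ^ K"
    using dsum_split[OF assms, of f K] dval_partial[where b=b and K=K and f=f] assms by simp
  have p: "real b ^ K > 0" using assms by simp
  show "real (dval b f K) / real b ^ K \<le> dsum b f"
    unfolding e using dsum_nonneg[OF assms] p by simp
  show "dsum b f \<le> (real (dval b f K) + 1) / real b ^ K"
    unfolding e using dsum_le1[OF assms] p by (simp add: add_divide_distrib divide_right_mono)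
qed

lemma dval_lt: "0 < b \<Longrightarrow> dval b f K < b ^ K"
proof (induction K)
  case 0 then show ?case by simp
next
  case (Suc K)
  have "clip b (f K) < b" using Suc by (simp add: clip_lt)
  then have "b * dval b f K + clip b (f K) < b * dval b f K + b" by simp
  also have "\<dots> = b * (dval b f K + 1)" by simp
  also have "\<dots> \<le> b * b ^ K" using Suc by (intro mult_le_mono2) simp
  finally show ?case by simp
qed

lemma divmod_char:
  fixes D c q b :: nat
  assumes "c < b"
  shows "b * D + c = q \<longleftrightarrow> D = q div b \<and> c = q mod b"
proof
  assume h: "b * D + c = q"
  then show "D = q div b \<and> c = q mod b" using assms by auto
next
  assume "D = q div b \<and> c = q mod b"
  then show "b * D + c = q" by simp
qed

lemma dval_eq_iff:
  assumes "0 < b" "q < b ^ K"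
  shows "\<exists>w. (\<forall>i. w i < b) \<and> (\<forall>f. dval b f K = q \<longleftrightarrow> (\<forall>i<K. clip b (f i) = w i))"
  using assms(2)
proof (induction K arbitrary: q)
  case 0
  then show ?case using assms(1) by (intro exI[of _ "\<lambda>_. 0"]) simp
next
  case (Suc K)
  have "q div b < b ^ K" using Suc.prems assms(1)
    by (simp add: div_less_iff_less_mult mult.commute)
  from Suc.IH[OF this] obtain w where w: "\<forall>i. w i < b"
    "\<forall>f. dval b f K = q div b \<longleftrightarrow> (\<forall>i<K. clip b (f i) = w i)" by blast
  show ?case
  proof (intro exI[of _ "w(K := q mod b)"] conjI allI)
    show "(w(K := q mod b)) i < b" for i using w(1) assms(1) by simp
    fix f
    have "dval b f (Suc K) = q \<longleftrightarrow> dval b f K = q div b \<and> clip b (f K) = q mod b"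
      using divmod_char[OF clip_lt[OF assms(1)]] by simp
    also have "\<dots> \<longleftrightarrow> (\<forall>i<Suc K. clip b (f i) = (w(K := q mod b)) i)"
      using w(2) by (auto simp: less_Suc_eq)
    finally show "dval b f (Suc K) = q \<longleftrightarrow> (\<forall>i<Suc K. clip b (f i) = (w(K := q mod b)) i)" .
  qed
qed

locale dseq =
  fixes b :: nat and I :: "'i set" and P :: "nat \<Rightarrow> 'i" and e :: "nat \<Rightarrow> nat"
  assumes b2: "2 \<le> b" and P_inj: "inj P" and P_in: "\<And>k. P k \<in> I" and e_lt: "\<And>k. e k < b"
begin

abbreviation "Mp \<equiv> measure_pmf (pmf_of_set (Perms b))"
abbreviation "Q \<equiv> PiM I (\<lambda>_. Mp)"

definition T :: "('i \<Rightarrow> nat \<Rightarrow> nat) \<Rightarrow> real" where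
  "T \<omega> = dsum b (\<lambda>k. \<omega> (P k) (e k))"

sublocale Qp: prob_space Q
  by (rule prob_space_PiM) (rule measure_pmf.prob_space_axioms)

lemma meas_digit[measurable]: "(\<lambda>\<omega>. real (clip b (\<omega> (P k) (e k)))) \<in> borel_measurable Q"
  by (rule measurable_compose[OF measurable_component_singleton[OF P_in]]) simp

lemma meas_dval[measurable]: "(\<lambda>\<omega>. real (dval b (\<lambda>i. \<omega> (P i) (e i)) k)) \<in> borel_measurable Q"
proof (induction k)
  case 0 then show ?case by simp
next
  case (Suc k)
  note [measurable] = Suc
  show ?case by simp measurable
qed

lemma meas_T[measurable]: "T \<in> borel_measurable Q"
  unfolding T_def dsum_def by measurable

lemma prob_digits:
  assumes w: "\<And>i. w i < b"
  shows "measure Q {\<omega> \<in> space Q. \<forall>i<k. clip b (\<omega> (P i) (e i)) = w i} = (1 / real b) ^ k"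
proof -
  interpret pp: product_prob_space "\<lambda>_. Mp" I
    by unfold_locales
  let ?X = "\<lambda>j. {\<pi>. clip b (\<pi> (e (inv P j))) = w (inv P j)}"
  have set: "{\<omega> \<in> space Q. \<forall>i<k. clip b (\<omega> (P i) (e i)) = w i} = {\<omega> \<in> space Q. \<forall>j\<in>P`{..<k}. \<omega> j \<in> ?X j}"
    using P_inj by (auto simp: inv_f_f)
  have "emeasure Q {\<omega> \<in> space Q. \<forall>i<k. clip b (\<omega> (P i) (e i)) = w i} = (\<Prod>j\<in>P`{..<k}. emeasure Mp (?X j))"
    unfolding set by (rule pp.emeasure_PiM_Collect) (auto simp: P_in)
  also have "\<dots> = (\<Prod>i<k. emeasure Mp {\<pi>. clip b (\<pi> (e i)) = w i})"
    by (subst prod.reindex) (auto intro: inj_on_subset[OF P_inj] simp: inv_f_f[OF P_inj])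
  also have "\<dots> = (\<Prod>i<k. ennreal (1 / real b))"
    using measure_perm_digit[OF e_lt w] by (simp add: measure_pmf.emeasure_eq_measure)
  also have "\<dots> = ennreal ((1 / real b) ^ k)"
    by (simp add: ennreal_power)
  finally show ?thesis
    by (simp add: Qp.emeasure_eq_measure)
qed

lemma prob_dval_eq:
  assumes q: "q < b ^ k"
  shows "measure Q {\<omega> \<in> space Q. dval b (\<lambda>i. \<omega> (P i) (e i)) k = q} = (1 / real b) ^ k"
proof -
  obtain w where w: "\<And>i. w i < b" "\<And>f. dval b f k = q \<longleftrightarrow> (\<forall>i<k. clip b (f i) = w i)"
    using dval_eq_iff[of b q k] b2 q by auto
  show ?thesis using prob_digits[OF w(1), of k] w(2) by simp
qed

lemma sets_dval_lt[measurable]: "{\<omega> \<in> space Q. dval b (\<lambda>i. \<omega> (P i) (e i)) k < t} \<in> sets Q"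
proof -
  have "{\<omega> \<in> space Q. dval b (\<lambda>i. \<omega> (P i) (e i)) k < t} = {\<omega> \<in> space Q. real (dval b (\<lambda>i. \<omega> (P i) (e i)) k) < real t}"
    by simp
  also have "\<dots> \<in> sets Q" by measurable
  finally show ?thesis .
qed

lemma sets_dval_eq[measurable]: "{\<omega> \<in> space Q. dval b (\<lambda>i. \<omega> (P i) (e i)) k = t} \<in> sets Q"
proof -
  have "{\<omega> \<in> space Q. dval b (\<lambda>i. \<omega> (P i) (e i)) k = t} = {\<omega> \<in> space Q. real (dval b (\<lambda>i. \<omega> (P i) (e i)) k) = real t}"
    by simp
  also have "\<dots> \<in> sets Q" by measurable
  finally show ?thesis .
qed

lemma prob_dval_lt:
  assumes "t \<le> b ^ k"
  shows "measure Q {\<omega> \<in> space Q. dval b (\<lambda>i. \<omega> (P i) (e i)) k < t} = real t * (1 / real b) ^ k"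
  using assms
proof (induction t)
  case 0 then show ?case by simp
next
  case (Suc t)
  have "{\<omega> \<in> space Q. dval b (\<lambda>i. \<omega> (P i) (e i)) k < Suc t} =
    {\<omega> \<in> space Q. dval b (\<lambda>i. \<omega> (P i) (e i)) k < t} \<union> {\<omega> \<in> space Q. dval b (\<lambda>i. \<omega> (P i) (e i)) k = t}"
    by auto
  have "measure Q {\<omega> \<in> space Q. dval b (\<lambda>i. \<omega> (P i) (e i)) k < Suc t} =
     measure Q {\<omega> \<in> space Q. dval b (\<lambda>i. \<omega> (P i) (e i)) k < t} + measure Q {\<omega> \<in> space Q. dval b (\<lambda>i. \<omega> (P i) (e i)) k = t}"
    unfolding \<open>_ = _ \<union> _\<close> by (rule Qp.finite_measure_Union[OF sets_dval_lt sets_dval_eq]) auto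
  also have "\<dots> = real t * (1 / real b) ^ k + (1 / real b) ^ k"
    using Suc by (simp add: prob_dval_eq)
  finally show ?case by (simp add: algebra_simps)
qed


lemma sets_T_le[measurable]: "{\<omega> \<in> space Q. T \<omega> \<le> x} \<in> sets Q"
  by measurable

lemma cdf_T_bounds:
  assumes x: "0 \<le> x" "x \<le> 1"
  shows "\<bar>measure Q {\<omega> \<in> space Q. T \<omega> \<le> x} - x\<bar> \<le> 1 / real b ^ k"
proof -
  let ?B = "real b ^ k"
  let ?p = "measure Q {\<omega> \<in> space Q. T \<omega> \<le> x}"
  let ?D = "\<lambda>\<omega>. dval b (\<lambda>i. \<omega> (P i) (e i)) k"
  have B: "?B > 0" using b2 by simp
  define t where "t = nat \<lfloor>x * ?B\<rfloor>"
  have xB: "0 \<le> x * ?B" using x B by simp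
  have t1: "real t \<le> x * ?B" unfolding t_def using xB by linarith
  have t2: "x * ?B < real t + 1" unfolding t_def using xB by linarith
  have "x * ?B \<le> ?B" using x B by simp
  then have "real t \<le> ?B" using t1 by linarith
  then have t3: "t \<le> b ^ k" by (metis of_nat_le_iff of_nat_power)
  have ob: "(1 / real b) ^ k = 1 / ?B" by (simp add: power_one_over)
  have sub1: "{\<omega> \<in> space Q. ?D \<omega> < t} \<subseteq> {\<omega> \<in> space Q. T \<omega> \<le> x}"
  proof safe
    fix \<omega> assume \<omega>: "\<omega> \<in> space Q" "?D \<omega> < t"
    have "real (?D \<omega>) + 1 \<le> real t" using \<omega>(2) by linarith
    have "T \<omega> \<le> (real (?D \<omega>) + 1) / ?B"
      unfolding T_def by (rule dsum_bounds(2)[OF b2])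
    also have "\<dots> \<le> real t / ?B"
      using \<open>real (?D \<omega>) + 1 \<le> real t\<close> B by (simp add: divide_right_mono)
    also have "\<dots> \<le> x" using t1 B by (simp add: pos_divide_le_eq)
    finally show "T \<omega> \<le> x" .
  qed
  have lo: "real t / ?B \<le> ?p"
    using Qp.finite_measure_mono[OF sub1] prob_dval_lt[OF t3] ob by simp
  have "x - 1 / ?B = (x * ?B - 1) / ?B" using B by (simp add: field_simps)
  also have "\<dots> \<le> real t / ?B" using t2 B by (intro divide_right_mono) auto
  finally have lo': "x - 1 / ?B \<le> real t / ?B" .
  have sub2: "{\<omega> \<in> space Q. T \<omega> \<le> x} \<subseteq> {\<omega> \<in> space Q. ?D \<omega> < min (t + 1) (b ^ k)}"
  proof safe
    fix \<omega> assume \<omega>: "\<omega> \<in> space Q" "T \<omega> \<le> x"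
    have "real (?D \<omega>) / ?B \<le> T \<omega>"
      unfolding T_def by (rule dsum_bounds(1)[OF b2])
    then have "real (?D \<omega>) / ?B \<le> x" using \<omega>(2) by linarith
    then have "real (?D \<omega>) \<le> x * ?B" using B by (simp add: pos_divide_le_eq)
    then have "real (?D \<omega>) < real t + 1" using t2 by linarith
    then have "?D \<omega> < t + 1" by linarith
    moreover have "?D \<omega> < b ^ k" using dval_lt b2 by simp
    ultimately show "?D \<omega> < min (t + 1) (b ^ k)" by simp
  qed
  have "?p \<le> real (min (t + 1) (b ^ k)) * (1 / real b) ^ k"
    using Qp.finite_measure_mono[OF sub2 sets_dval_lt] prob_dval_lt[of "min (t + 1) (b ^ k)"] by simp
  also have "\<dots> \<le> real (t + 1) * (1 / real b) ^ k"
    by (intro mult_right_mono) auto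
  also have "\<dots> = (real t + 1) / ?B" using ob by simp
  also have "\<dots> \<le> x + 1 / ?B" using t1 B by (simp add: add_divide_distrib pos_divide_le_eq)
  finally have up: "?p \<le> x + 1 / ?B" .
  show ?thesis using lo lo' up by linarith
qed

lemma cdf_T:
  assumes x: "0 \<le> x" "x \<le> 1"
  shows "measure Q {\<omega> \<in> space Q. T \<omega> \<le> x} = x"
proof (rule ccontr)
  let ?p = "measure Q {\<omega> \<in> space Q. T \<omega> \<le> x}"
  assume "?p \<noteq> x"
  then have "\<bar>?p - x\<bar> > 0" by simp
  from real_arch_pow_inv[OF this, of "1 / real b"] b2 obtain k where "(1 / real b) ^ k < \<bar>?p - x\<bar>"
    by auto
  then have "1 / real b ^ k < \<bar>?p - x\<bar>" by (simp add: power_one_over)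
  with cdf_T_bounds[OF x, of k] show False by linarith
qed

definition Zd :: "real \<Rightarrow> nat \<Rightarrow> ('i \<Rightarrow> nat \<Rightarrow> nat) \<Rightarrow> real" where
  "Zd A0 K \<omega> = A0 + T \<omega> / real b ^ K"

lemma meas_Zd[measurable]: "Zd A0 K \<in> borel_measurable Q"
  unfolding Zd_def by measurable

lemma distr_Zd:
  "distributed Q lborel (Zd A0 K) (\<lambda>s. indicator {A0..A0 + 1 / real b ^ K} s / measure lborel {A0..A0 + 1 / real b ^ K})"
proof (rule Qp.uniform_distrI_borel_atLeastAtMost)
  let ?B = "real b ^ K"
  have B: "?B > 0" using b2 by simp
  show "Zd A0 K \<in> borel_measurable Q" by measurable
  show "A0 < A0 + 1 / ?B" using B by simp
  fix t assume t: "A0 \<le> t" "t \<le> A0 + 1 / ?B"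
  have pw: "A0 + y / ?B \<le> t \<longleftrightarrow> y \<le> (t - A0) * ?B" for y
  proof -
    have "A0 + y / ?B \<le> t \<longleftrightarrow> y / ?B \<le> t - A0" by linarith
    also have "\<dots> \<longleftrightarrow> y \<le> (t - A0) * ?B" by (rule pos_divide_le_eq[OF B])
    finally show ?thesis .
  qed
  have eq: "{\<omega> \<in> space Q. Zd A0 K \<omega> \<le> t} = {\<omega> \<in> space Q. T \<omega> \<le> (t - A0) * ?B}"
    unfolding Zd_def pw ..
  have x: "0 \<le> (t - A0) * ?B" "(t - A0) * ?B \<le> 1"
    using t B by (auto simp: field_simps)
  show "measure Q {\<omega> \<in> space Q. Zd A0 K \<omega> \<le> t} = (t - A0) / (A0 + 1 / ?B - A0)"
    unfolding eq cdf_T[OF x] using B by simp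
qed

lemma AE_Zd_notin:
  assumes N: "N \<in> null_sets lborel"
  shows "AE \<omega> in Q. Zd A0 K \<omega> \<notin> N"
proof -
  note D = distr_Zd[of A0 K]
  have "AE s in lborel. s \<notin> N" by (rule AE_not_in[OF N])
  then have "AE s in density lborel (\<lambda>s. indicator {A0..A0 + 1 / real b ^ K} s / measure lborel {A0..A0 + 1 / real b ^ K}). s \<notin> N"
    by (subst AE_density[OF distributed_borel_measurable[OF D]]) (auto elim: AE_mp)
  then have "AE s in distr Q lborel (Zd A0 K). s \<notin> N"
    by (simp only: distributed_distr_eq_density[OF D])
  then show ?thesis by (rule AE_distrD[OF distributed_measurable[OF D]])
qed

end

lemma distr_merge_PiM:
  assumes M: "\<And>i. prob_space (M i)" and IJ: "I \<inter> J = {}"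
  shows "distr (PiM I M \<Otimes>\<^sub>M PiM J M) (PiM (I \<union> J) M) (merge I J) = PiM (I \<union> J) M"
proof (rule measure_eqI_PiM_infinite[symmetric, OF refl])
  interpret PI: prob_space "PiM I M" by (rule prob_space_PiM) (rule M)
  interpret PJ: prob_space "PiM J M" by (rule prob_space_PiM) (rule M)
  interpret PIJ: prob_space "PiM (I \<union> J) M" by (rule prob_space_PiM) (rule M)
  show "finite_measure (PiM (I \<union> J) M)" by unfold_locales
  fix A F assume F: "finite F" "F \<subseteq> I \<union> J" and A: "\<And>i. i \<in> F \<Longrightarrow> A i \<in> sets (M i)"
  let ?X = "prod_emb (I \<union> J) M F (Pi\<^sub>E F A)"
  let ?XI = "prod_emb I M (F \<inter> I) (Pi\<^sub>E (F \<inter> I) A)"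
  let ?XJ = "prod_emb J M (F \<inter> J) (Pi\<^sub>E (F \<inter> J) A)"
  have "PiM (I \<union> J) M ?X = (\<Prod>i\<in>F. M i (A i))"
    using M F A by (intro emeasure_PiM_emb) auto
  also have "\<dots> = (\<Prod>i\<in>F \<inter> I. M i (A i)) * (\<Prod>i\<in>F \<inter> J. M i (A i))"
  proof -
    have "F = (F \<inter> I) \<union> (F \<inter> J)" using F by auto
    then have "(\<Prod>i\<in>F. M i (A i)) = (\<Prod>i\<in>(F \<inter> I) \<union> (F \<inter> J). M i (A i))" by simp
    also have "\<dots> = (\<Prod>i\<in>F \<inter> I. M i (A i)) * (\<Prod>i\<in>F \<inter> J. M i (A i))"
      using F IJ by (intro prod.union_disjoint) auto
    finally show ?thesis .
  qed
  also have "(\<Prod>i\<in>F \<inter> I. M i (A i)) = PiM I M ?XI"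
    using M F A by (intro emeasure_PiM_emb[symmetric]) auto
  also have "(\<Prod>i\<in>F \<inter> J. M i (A i)) = PiM J M ?XJ"
    using M F A by (intro emeasure_PiM_emb[symmetric]) auto
  also have "PiM I M ?XI * PiM J M ?XJ = (PiM I M \<Otimes>\<^sub>M PiM J M) (?XI \<times> ?XJ)"
    using F A by (intro PJ.emeasure_pair_measure_Times[symmetric] sets_PiM_I) auto
  also have "?XI \<times> ?XJ = merge I J -` ?X \<inter> space (PiM I M \<Otimes>\<^sub>M PiM J M)"
    using IJ F A[THEN sets.sets_into_space] disjoint_iff[THEN iffD1, OF IJ]
    by (auto simp: prod_emb_def space_pair_measure space_PiM PiE_iff merge_def extensional_def
        split: if_split_asm; blast)
  finally show "PiM (I \<union> J) M ?X = distr (PiM I M \<Otimes>\<^sub>M PiM J M) (PiM (I \<union> J) M) (merge I J) ?X"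
    using F A by (subst emeasure_distr) (auto intro!: sets_PiM_I)
qed simp

definition scp :: "nat \<Rightarrow> ('d::finite \<times> nat list \<Rightarrow> nat \<Rightarrow> nat) \<Rightarrow> real^'d \<Rightarrow> real^'d" where
  "scp b \<sigma> x = (\<chi> j. dsum b (\<lambda>k. \<sigma> (j, digit_prefix b (x$j) (Suc k)) (digit b (x$j) (Suc k))))"

abbreviation Om :: "nat \<Rightarrow> ('d::finite \<times> nat list \<Rightarrow> nat \<Rightarrow> nat) measure" where
  "Om b \<equiv> PiM UNIV (\<lambda>_. measure_pmf (pmf_of_set (Perms b)))"

lemma len_prefix[simp]: "length (digit_prefix b a k) = k - 1"
  by (simp add: digit_prefix_def)

lemma digit_lt: "0 < b \<Longrightarrow> digit b a k < b"
  by (simp add: digit_def)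

lemma take_prefix: "K \<le> k \<Longrightarrow> take K (digit_prefix b c (Suc k)) = digit_prefix b c (Suc K)"
  by (simp add: digit_prefix_def take_map take_upt del: upt_Suc)

lemma scp_eq:
  assumes b: "2 \<le> b" and g: "\<forall>i. \<sigma> i \<in> Perms b"
  shows "scramble_point b \<sigma> x = scp b \<sigma> x"
proof -
  have c: "clip b (\<sigma> i (digit b a k)) = \<sigma> i (digit b a k)" for i a k
    using Perms_lt[OF g[rule_format] digit_lt] b by (simp add: clip_id)
  show ?thesis
    unfolding scramble_point_def scp_def scramble_coord_def dsum_def c ..
qed

lemma inj_pref: "inj (\<lambda>k. (j, digit_prefix b a (Suc (k + K))))"
proof (rule injI)
  fix k k' assume "(j, digit_prefix b a (Suc (k + K))) = (j, digit_prefix b a (Suc (k' + K)))"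
  then have "length (digit_prefix b a (Suc (k + K))) = length (digit_prefix b a (Suc (k' + K)))" by simp
  then show "k = k'" by simp
qed

lemma inj_pref0: "inj (\<lambda>k. (j, digit_prefix b a (Suc k)))"
  using inj_pref[of j b a 0] by simp

lemma dseq_coord:
  assumes "2 \<le> b"
  shows "dseq b (UNIV :: ('d \<times> nat list) set) (\<lambda>k. (j, digit_prefix b a (Suc k))) (\<lambda>k. digit b a (Suc k))"
  using assms inj_pref0[of j b a] by unfold_locales (auto simp: digit_lt)


lemma scp_coord_T:
  fixes x :: "real^'d::finite"
  assumes "2 \<le> b"
  shows "scp b \<sigma> x $ j = dseq.T b (\<lambda>k. (j, digit_prefix b (x$j) (Suc k))) (\<lambda>k. digit b (x$j) (Suc k)) \<sigma>"
  using dseq.T_def[OF dseq_coord[OF assms, where j=j and a="x$j"]] by (simp add: scp_def)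

lemma meas_vec:
  fixes f :: "'a \<Rightarrow> real^'n"
  assumes "\<And>j. (\<lambda>\<omega>. f \<omega> $ j) \<in> borel_measurable M"
  shows "f \<in> borel_measurable M"
proof (rule borel_measurable_euclidean_space[THEN iffD2], intro ballI)
  fix i :: "real^'n" assume "i \<in> Basis"
  then obtain j where "i = axis j 1" by (auto simp: Basis_vec_def)
  then show "(\<lambda>x. f x \<bullet> i) \<in> borel_measurable M"
    using assms[of j] by (simp add: cart_eq_inner_axis[symmetric])
qed

lemma meas_scp:
  fixes x :: "real^'d::finite"
  assumes "2 \<le> b"
  shows "(\<lambda>\<sigma>. scp b \<sigma> x) \<in> borel_measurable (Om b)"
proof (rule meas_vec)
  fix j
  interpret dq: dseq b "UNIV :: ('d \<times> nat list) set" "\<lambda>k. (j, digit_prefix b (x$j) (Suc k))" "\<lambda>k. digit b (x$j) (Suc k)"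
    by (rule dseq_coord[OF assms])
  show "(\<lambda>\<sigma>. scp b \<sigma> x $ j) \<in> borel_measurable (Om b)"
    unfolding scp_coord_T[OF assms] by (rule dq.meas_T)
qed

lemma AE_scp_box:
  fixes x :: "real^'d::finite"
  assumes b: "2 \<le> b"
  shows "AE \<sigma> in Om b. scp b \<sigma> x \<in> box 0 1"
proof -
  have cj: "AE \<sigma> in Om b. 0 < scp b \<sigma> x $ j \<and> scp b \<sigma> x $ j < 1" for j
  proof -
    interpret dq: dseq b "UNIV :: ('d \<times> nat list) set" "\<lambda>k. (j, digit_prefix b (x$j) (Suc k))" "\<lambda>k. digit b (x$j) (Suc k)"
      by (rule dseq_coord[OF b])
    have "AE \<sigma> in Om b. dq.Zd 0 0 \<sigma> \<notin> {0, 1}"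
      by (rule dq.AE_Zd_notin) (rule finite_imp_null_set_lborel, simp)
    then show ?thesis
    proof (rule AE_mp[OF _ AE_I2[OF impI]])
      fix \<sigma> assume "dq.Zd 0 0 \<sigma> \<notin> {0, 1}"
      then have "dq.T \<sigma> \<noteq> 0" "dq.T \<sigma> \<noteq> 1" by (auto simp: dq.Zd_def)
      moreover have "0 \<le> dq.T \<sigma>" "dq.T \<sigma> \<le> 1"
        unfolding dq.T_def using b by (auto intro: dsum_nonneg dsum_le1)
      ultimately show "0 < scp b \<sigma> x $ j \<and> scp b \<sigma> x $ j < 1"
        unfolding scp_coord_T[OF b] by auto
    qed
  qed
  have "AE \<sigma> in Om b. \<forall>j\<in>UNIV. 0 < scp b \<sigma> x $ j \<and> scp b \<sigma> x $ j < 1"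
    by (rule AE_finite_allI) (simp, rule cj)
  then show ?thesis by (rule eventually_mono) (simp add: mem_box_cart)
qed

lemma AE_good: "AE \<sigma> in (Om b :: ('d::finite \<times> nat list \<Rightarrow> nat \<Rightarrow> nat) measure). \<forall>i. \<sigma> i \<in> Perms b"
proof (subst AE_all_countable, intro allI)
  fix i :: "'d \<times> nat list"
  show "AE \<sigma> in Om b. \<sigma> i \<in> Perms b"
    by (rule AE_PiM_component)
       (auto simp: measure_pmf.prob_space_axioms AE_measure_pmf_iff Perms_ne Perms_finite)
qed

lemma AE_pair_distinct:
  fixes x y :: "real^'d::finite" and G g :: "real^'d \<Rightarrow> real" and j0 :: 'd and K :: nat
  assumes b: "2 \<le> b"
    and G[measurable]: "G \<in> borel_measurable borel"
    and Gg: "\<And>z. z \<in> box 0 1 \<Longrightarrow> G z = g z"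
    and cont: "\<And>z y'. z \<in> box 0 1 \<Longrightarrow>
       emeasure lborel {s \<in> {0<..<1}. g (\<chi> k. if k = j0 then s else z $ k) = y'} = 0"
    and pd: "digit_prefix b (x$j0) (Suc K) \<noteq> digit_prefix b (y$j0) (Suc K)"
  shows "AE \<sigma> in Om b. scp b \<sigma> x \<in> box 0 1 \<and> scp b \<sigma> y \<in> box 0 1 \<longrightarrow> G (scp b \<sigma> x) \<noteq> G (scp b \<sigma> y)"
proof -
  define a where "a = x$j0"
  define pa where "pa = digit_prefix b a (Suc K)"
  define J :: "('d \<times> nat list) set" where "J = {(j0, ds) | ds. K \<le> length ds \<and> take K ds = pa}"
  define I' where "I' = - J"
  let ?Mp = "\<lambda>_ :: 'd \<times> nat list. measure_pmf (pmf_of_set (Perms b))"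
  let ?P1 = "PiM I' ?Mp"
  let ?P2 = "PiM J ?Mp"
  define Pg where "Pg \<sigma> \<longleftrightarrow> (scp b \<sigma> x \<in> box 0 1 \<and> scp b \<sigma> y \<in> box 0 1 \<longrightarrow> G (scp b \<sigma> x) \<noteq> G (scp b \<sigma> y))"
    for \<sigma> :: "'d \<times> nat list \<Rightarrow> nat \<Rightarrow> nat"
  have U: "I' \<union> J = UNIV" and D: "I' \<inter> J = {}" unfolding I'_def by auto
  have "distr (?P1 \<Otimes>\<^sub>M ?P2) (PiM (I' \<union> J) ?Mp) (merge I' J) = PiM (I' \<union> J) ?Mp"
    by (rule distr_merge_PiM[OF measure_pmf.prob_space_axioms D])
  then have distr_eq: "distr (?P1 \<Otimes>\<^sub>M ?P2) (Om b) (merge I' J) = Om b"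
    unfolding U .
  have mm[measurable]: "merge I' J \<in> measurable (?P1 \<Otimes>\<^sub>M ?P2) (Om b)"
    using measurable_merge[of I' J ?Mp] unfolding U .
  have [measurable]: "box 0 1 \<in> sets (borel :: (real^'d) measure)" by (simp add: borel_open)
  note mx[measurable] = meas_scp[OF b, of x]
  note my[measurable] = meas_scp[OF b, of y]
  have Gx[measurable]: "(\<lambda>\<sigma>. G (scp b \<sigma> x)) \<in> borel_measurable (Om b)"
    by (rule measurable_compose[OF mx G])
  have Gy[measurable]: "(\<lambda>\<sigma>. G (scp b \<sigma> y)) \<in> borel_measurable (Om b)"
    by (rule measurable_compose[OF my G])
  have bx: "box 0 1 \<in> sets (borel :: (real^'d) measure)" by (simp add: borel_open)
  have p1: "Measurable.pred (Om b) (\<lambda>\<sigma>. scp b \<sigma> x \<in> box 0 1)" by (rule pred_sets2[OF bx mx])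
  have p2: "Measurable.pred (Om b) (\<lambda>\<sigma>. scp b \<sigma> y \<in> box 0 1)" by (rule pred_sets2[OF bx my])
  have p3: "Measurable.pred (Om b) (\<lambda>\<sigma>. G (scp b \<sigma> x) \<noteq> G (scp b \<sigma> y))"
    unfolding pred_def by (rule borel_measurable_neq[OF Gx Gy])
  have predPg: "Measurable.pred (Om b) Pg"
    unfolding Pg_def by (rule pred_intros_logic(4)[OF pred_intros_logic(3)[OF p1 p2] p3])
  have inJ: "(j, ds) \<in> J \<longleftrightarrow> j = j0 \<and> K \<le> length ds \<and> take K ds = pa" for j ds
    by (auto simp: J_def)
  have mrg: "merge I' J (\<omega>2, \<omega>1) i = (if i \<in> J then \<omega>1 i else \<omega>2 i)" for \<omega>1 \<omega>2 :: "'d \<times> nat list \<Rightarrow> nat \<Rightarrow> nat" and i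
    by (simp add: merge_def I'_def)
  have notJ_y: "(j, digit_prefix b (y$j) (Suc k)) \<notin> J" for j k
    using pd by (auto simp: inJ take_prefix pa_def a_def)
  have dq: "dseq b J (\<lambda>k. (j0, digit_prefix b a (Suc (k + K)))) (\<lambda>k. digit b a (Suc (k + K)))"
  proof
    show "2 \<le> b" by (rule b)
    show "inj (\<lambda>k. (j0, digit_prefix b a (Suc (k + K))))" by (rule inj_pref)
    show "(j0, digit_prefix b a (Suc (k + K))) \<in> J" for k
      by (simp add: inJ take_prefix pa_def)
    show "digit b a (Suc (k + K)) < b" for k using b by (simp add: digit_lt)
  qed
  interpret dq: dseq b J "\<lambda>k. (j0, digit_prefix b a (Suc (k + K)))" "\<lambda>k. digit b a (Suc (k + K))"
    by (rule dq)
  have key: "AE \<omega>1 in ?P2. Pg (merge I' J (\<omega>2, \<omega>1))" for \<omega>2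
  proof -
    define A0 where "A0 = (\<Sum>k<K. real (clip b (\<omega>2 (j0, digit_prefix b a (Suc k)) (digit b a (Suc k)))) / real b ^ Suc k)"
    define W where "W = scp b \<omega>2 x"
    define y0 where "y0 = scp b \<omega>2 y"
    define z' where "z' s = (\<chi> k. if k = j0 then s else W $ k)" for s
    have key2: "scp b (merge I' J (\<omega>2, \<omega>1)) y = y0" for \<omega>1
      unfolding y0_def scp_def by (simp add: mrg notJ_y)
    have key1: "scp b (merge I' J (\<omega>2, \<omega>1)) x = z' (dq.Zd A0 K \<omega>1)" for \<omega>1
    proof (rule vec_eq_iff[THEN iffD2], intro allI)
      fix j
      show "scp b (merge I' J (\<omega>2, \<omega>1)) x $ j = z' (dq.Zd A0 K \<omega>1) $ j"
      proof (cases "j = j0")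
        case False
        then show ?thesis by (simp add: scp_def z'_def W_def mrg inJ)
      next
        case True
        define f where "f k = merge I' J (\<omega>2, \<omega>1) (j0, digit_prefix b a (Suc k)) (digit b a (Suc k))" for k
        have "scp b (merge I' J (\<omega>2, \<omega>1)) x $ j = dsum b f"
          using True by (simp add: scp_def a_def f_def[abs_def])
        also have "\<dots> = (\<Sum>k<K. real (clip b (f k)) / real b ^ Suc k) + dsum b (\<lambda>k. f (k + K)) / real b ^ K"
          by (rule dsum_split[OF b])
        also have "(\<Sum>k<K. real (clip b (f k)) / real b ^ Suc k) = A0"
          unfolding A0_def by (intro sum.cong refl) (simp add: f_def mrg inJ)
        also have "dsum b (\<lambda>k. f (k + K)) = dq.T \<omega>1"
          unfolding dq.T_def f_def by (simp add: mrg inJ take_prefix pa_def)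
        finally show ?thesis using True by (simp add: z'_def dq.Zd_def)
      qed
    qed
    show ?thesis
    proof (cases "z' (1/2) \<in> box 0 1")
      case False
      have nb: "z' s \<notin> box 0 1" for s
      proof
        assume "z' s \<in> box 0 1"
        then have h: "\<forall>i. 0 < z' s $ i \<and> z' s $ i < 1" by (simp add: mem_box_cart)
        have "\<forall>i. 0 < z' (1/2) $ i \<and> z' (1/2) $ i < 1"
        proof
          fix i show "0 < z' (1/2) $ i \<and> z' (1/2) $ i < 1"
            using h[rule_format, of i] by (cases "i = j0") (auto simp: z'_def)
        qed
        then have "z' (1/2) \<in> box 0 1" by (simp add: mem_box_cart)
        with False show False by simp
      qed
      show ?thesis
        by (rule AE_I2) (simp add: Pg_def key1 nb)
    next
      case x0: True
      have z'box: "z' s \<in> box 0 1" if "s \<in> {0<..<1}" for s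
      proof -
        have h: "\<forall>i. 0 < z' (1/2) $ i \<and> z' (1/2) $ i < 1" using x0 by (simp add: mem_box_cart)
        have "\<forall>i. 0 < z' s $ i \<and> z' s $ i < 1"
        proof
          fix i show "0 < z' s $ i \<and> z' s $ i < 1"
            using h[rule_format, of i] that by (cases "i = j0") (auto simp: z'_def)
        qed
        then show ?thesis by (simp add: mem_box_cart)
      qed
      have z'eq: "(\<chi> k. if k = j0 then s else z' (1/2) $ k) = z' s" for s
        by (simp add: vec_eq_iff z'_def)
      define N where "N = {s \<in> {0<..<1}. g (z' s) = g y0}"
      have N_eq: "N = {s \<in> {0<..<1}. G (z' s) = g y0}"
        using z'box Gg by (auto simp: N_def)
      have z'm[measurable]: "z' \<in> borel_measurable borel"
      proof (rule meas_vec)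
        fix j show "(\<lambda>s. z' s $ j) \<in> borel_measurable borel"
          by (cases "j = j0") (simp_all add: z'_def)
      qed
      have Nsets: "N \<in> sets borel" unfolding N_eq by measurable
      have "emeasure lborel N = 0"
        using cont[OF x0, of "g y0"] by (simp add: z'eq N_def)
      then have Nnull: "N \<in> null_sets lborel"
        using Nsets by (intro null_setsI) auto
      have "AE \<omega>1 in ?P2. dq.Zd A0 K \<omega>1 \<notin> N"
        by (rule dq.AE_Zd_notin[OF Nnull])
      then show ?thesis
      proof (rule eventually_mono)
        fix \<omega>1 assume nN: "dq.Zd A0 K \<omega>1 \<notin> N"
        show "Pg (merge I' J (\<omega>2, \<omega>1))"
          unfolding Pg_def key1 key2
        proof (intro impI, elim conjE)
          let ?Z = "dq.Zd A0 K \<omega>1"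
          assume zb: "z' ?Z \<in> box 0 1" and yb: "y0 \<in> box 0 1"
          have "0 < z' ?Z $ j0" "z' ?Z $ j0 < 1" using zb by (auto simp: mem_box_cart)
          then have "?Z \<in> {0<..<1}" by (simp add: z'_def)
          with nN have "g (z' ?Z) \<noteq> g y0" by (simp add: N_def)
          then show "G (z' ?Z) \<noteq> G y0" using Gg[OF zb] Gg[OF yb] by simp
        qed
      qed
    qed
  qed
  have AEpair: "AE z in ?P1 \<Otimes>\<^sub>M ?P2. Pg (merge I' J z)"
  proof -
    interpret P1: prob_space ?P1 by (rule prob_space_PiM) (rule measure_pmf.prob_space_axioms)
    interpret P2: prob_space ?P2 by (rule prob_space_PiM) (rule measure_pmf.prob_space_axioms)
    interpret PP: pair_prob_space ?P1 ?P2 by unfold_locales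
    show ?thesis
    proof (rule PP.AE_pair_measure)
      have "Measurable.pred (?P1 \<Otimes>\<^sub>M ?P2) (\<lambda>z. Pg (merge I' J z))"
        by (rule measurable_compose[OF mm predPg])
      then show "{z \<in> space (?P1 \<Otimes>\<^sub>M ?P2). Pg (merge I' J z)} \<in> sets (?P1 \<Otimes>\<^sub>M ?P2)"
        by (simp add: pred_def)
      show "AE \<omega>2 in ?P1. AE \<omega>1 in ?P2. Pg (merge I' J (\<omega>2, \<omega>1))"
        by (rule AE_I2) (rule key)
    qed
  qed
  have "AE \<sigma> in distr (?P1 \<Otimes>\<^sub>M ?P2) (Om b) (merge I' J). Pg \<sigma>"
    by (subst AE_distr_iff[OF mm predPg[unfolded pred_def]]) (rule AEpair)
  then have "AE \<sigma> in Om b. Pg \<sigma>" by (simp only: distr_eq)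
  then show ?thesis unfolding Pg_def .
qed

lemma floor_step:
  assumes b: "2 \<le> b" and a: "0 \<le> a"
  shows "\<lfloor>a * real b ^ Suc k\<rfloor> = int b * \<lfloor>a * real b ^ k\<rfloor> + int (digit b a (Suc k))"
proof -
  let ?F = "\<lfloor>a * real b ^ Suc k\<rfloor>"
  have nn: "0 \<le> ?F" using a b by simp
  have "\<lfloor>a * real b ^ k\<rfloor> = \<lfloor>(a * real b ^ Suc k) / real_of_int (int b)\<rfloor>"
    using b by simp
  also have "\<dots> = ?F div int b" by (rule floor_divide_real_eq_div) simp
  finally have d: "\<lfloor>a * real b ^ k\<rfloor> = ?F div int b" .
  have m: "int (digit b a (Suc k)) = ?F mod int b"
    unfolding digit_def using nn by (simp add: zmod_int)
  show ?thesis unfolding d m by simp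
qed

lemma digits_differ:
  assumes b: "2 \<le> b" and a: "0 \<le> a" "a < 1" and c: "0 \<le> c" "c < 1" and ac: "a \<noteq> c"
  shows "\<exists>K. digit_prefix b a (Suc K) \<noteq> digit_prefix b c (Suc K)"
proof (rule ccontr)
  assume "\<not> ?thesis"
  then have eqp: "digit_prefix b a (Suc K) = digit_prefix b c (Suc K)" for K by blast
  have eqd: "digit b a (Suc k) = digit b c (Suc k)" for k
  proof -
    have "digit_prefix b a (Suc (Suc k)) ! k = digit_prefix b c (Suc (Suc k)) ! k" using eqp by simp
    then show ?thesis by (simp add: digit_prefix_def nth_map del: upt_Suc)
  qed
  have fl: "\<lfloor>a * real b ^ k\<rfloor> = \<lfloor>c * real b ^ k\<rfloor>" for k
  proof (induction k)
    case 0
    have "\<lfloor>a\<rfloor> = 0" "\<lfloor>c\<rfloor> = 0" using a c by (simp_all add: floor_eq_iff)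
    then show ?case by simp
  next
    case (Suc k)
    then show ?case using floor_step[OF b a(1), of k] floor_step[OF b c(1), of k] eqd[of k] by simp
  qed
  have "\<bar>a - c\<bar> > 0" using ac by simp
  from real_arch_pow_inv[OF this, of "1 / real b"] b obtain k where k: "(1 / real b) ^ k < \<bar>a - c\<bar>"
    by auto
  have B: "real b ^ k > 0" using b by simp
  have "\<bar>a * real b ^ k - c * real b ^ k\<bar> < 1"
    using fl[of k] by linarith
  then have "\<bar>a - c\<bar> * real b ^ k < 1" by (simp add: abs_mult left_diff_distrib[symmetric])
  then have "\<bar>a - c\<bar> < 1 / real b ^ k" using B by (simp add: pos_less_divide_eq)
  with k show False by (simp add: power_one_over)
qed

lemma AE_ne:
  fixes x y :: "real^'d::finite" and g :: "real^'d \<Rightarrow> real"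
  assumes b: "2 \<le> b"
    and G: "(\<lambda>z. indicator (box 0 1) z * g z) \<in> borel_measurable borel"
    and cont: "\<And>z j y'. z \<in> box 0 1 \<Longrightarrow>
       emeasure lborel {s \<in> {0<..<1}. g (\<chi> k. if k = j then s else z $ k) = y'} = 0"
    and x: "\<And>j. 0 \<le> x$j \<and> x$j < 1" and y: "\<And>j. 0 \<le> y$j \<and> y$j < 1" and xy: "x \<noteq> y"
  shows "AE \<sigma> in Om b. g (scramble_point b \<sigma> x) \<noteq> g (scramble_point b \<sigma> y)"
proof -
  obtain j0 where j0: "x$j0 \<noteq> y$j0" using xy by (auto simp: vec_eq_iff)
  obtain K where K: "digit_prefix b (x$j0) (Suc K) \<noteq> digit_prefix b (y$j0) (Suc K)"
    using digits_differ[OF b _ _ _ _ j0] x[of j0] y[of j0] by blast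
  let ?G = "\<lambda>z. indicator (box 0 1) z * g z"
  have Gg: "z \<in> box 0 1 \<Longrightarrow> ?G z = g z" for z by simp
  have P: "AE \<sigma> in Om b. scp b \<sigma> x \<in> box 0 1 \<and> scp b \<sigma> y \<in> box 0 1 \<longrightarrow> ?G (scp b \<sigma> x) \<noteq> ?G (scp b \<sigma> y)"
    by (rule AE_pair_distinct[OF b G Gg cont K])
  show ?thesis
    using AE_good AE_scp_box[OF b, of x] AE_scp_box[OF b, of y] P
  proof eventually_elim
    case (elim \<sigma>)
    then show ?case using scp_eq[OF b elim(1)] by simp
  qed
qed

lemma net_mult:
  fixes u :: "nat \<Rightarrow> real^'d::finite"
  assumes net: "is_tmd_net b t m u" and b: "2 \<le> b" and i0: "i0 < b ^ m"
  shows "card {i. i < b ^ m \<and> u i = u i0} \<le> b ^ t"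
proof -
  define w where "w = u i0"
  obtain j0 :: 'd where True by simp
  define k where "k j = (if j = j0 then m - t else 0)" for j
  define T where "T j = (if j = j0 then nat \<lfloor>w$j0 * real b ^ (m - t)\<rfloor> else 0)" for j
  have w01: "0 \<le> w$j \<and> w$j < 1" for j using net i0 unfolding is_tmd_net_def w_def by blast
  have B: "real b ^ (m - t) > 0" using b by simp
  have Tlt: "T j < b ^ k j" for j
  proof (cases "j = j0")
    case True
    have "w$j0 * real b ^ (m - t) < real b ^ (m - t)" using w01[of j0] B by simp
    then have "\<lfloor>w$j0 * real b ^ (m - t)\<rfloor> < int b ^ (m - t)"
      by (metis floor_less_iff of_int_of_nat_eq of_int_power of_nat_power)
    moreover have F0: "0 \<le> \<lfloor>w$j0 * real b ^ (m - t)\<rfloor>" using w01[of j0] B by simp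
    ultimately have "nat \<lfloor>w$j0 * real b ^ (m - t)\<rfloor> < b ^ (m - t)"
      using nat_less_iff[OF F0, of "b ^ (m - t)"] by simp
    then show ?thesis using True by (simp add: T_def k_def)
  next
    case False then show ?thesis by (simp add: T_def k_def)
  qed
  have ksum: "(\<Sum>j\<in>UNIV. k j) = m - t" unfolding k_def by simp
  have card_eq: "card {i. i < b ^ m \<and> u i \<in> elem_interval b k T} = b ^ t"
    using net Tlt ksum unfolding is_tmd_net_def by blast
  have win: "w \<in> elem_interval b k T"
    unfolding elem_interval_def
  proof (safe)
    fix j
    show "real (T j) / real b ^ k j \<le> w $ j"
    proof (cases "j = j0")
      case True
      have "real (T j0) \<le> w$j0 * real b ^ (m - t)" using w01[of j0] B by (simp add: T_def)
      then show ?thesis using True B by (simp add: k_def pos_divide_le_eq)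
    next
      case False then show ?thesis using w01[of j] by (simp add: T_def k_def)
    qed
    show "w $ j < (real (T j) + 1) / real b ^ k j"
    proof (cases "j = j0")
      case True
      have "w$j0 * real b ^ (m - t) < real (T j0) + 1" using w01[of j0] B by (simp add: T_def)
      then show ?thesis using True B by (simp add: k_def pos_less_divide_eq)
    next
      case False then show ?thesis using w01[of j] by (simp add: T_def k_def)
    qed
  qed
  have "{i. i < b ^ m \<and> u i = u i0} \<subseteq> {i. i < b ^ m \<and> u i \<in> elem_interval b k T}"
    using win by (auto simp: w_def)
  then have "card {i. i < b ^ m \<and> u i = u i0} \<le> card {i. i < b ^ m \<and> u i \<in> elem_interval b k T}"
    by (intro card_mono) auto
  then show ?thesis using card_eq by simp
qed

lemma emp_cdf_mono:
  "y \<le> y' \<Longrightarrow> emp_cdf n L y \<le> emp_cdf n L y'"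
  unfolding emp_cdf_def by (intro divide_right_mono) (auto intro!: card_mono)

lemma quantile_bound:
  fixes L :: "nat \<Rightarrow> real" and v \<alpha> :: real and n B :: nat
  assumes n: "0 < n" and \<alpha>: "0 < \<alpha>" "\<alpha> < 1"
    and mult: "\<And>y. card {i. i < n \<and> L i = y} \<le> B"
  shows "\<bar>emp_cdf n L (Inf {y. emp_cdf n L y \<ge> \<alpha>}) - emp_cdf n L v\<bar> \<le> real B / real n + \<bar>emp_cdf n L v - \<alpha>\<bar>"
proof -
  let ?F = "emp_cdf n L"
  define S where "S = {y. ?F y \<ge> \<alpha>}"
  define C where "C = {y \<in> L ` {..<n}. ?F y \<ge> \<alpha>}"
  have Cfin: "finite C" unfolding C_def by simp
  have dom: "\<exists>y'\<in>C. y' \<le> y" if y: "y \<in> S" for y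
  proof -
    have pos: "?F y > 0" using y \<alpha> by (simp add: S_def)
    have ne: "{i. i < n \<and> L i \<le> y} \<noteq> {}"
    proof
      assume "{i. i < n \<and> L i \<le> y} = {}"
      then have "?F y = 0" by (simp add: emp_cdf_def)
      with pos show False by simp
    qed
    define y' where "y' = Max (L ` {i. i < n \<and> L i \<le> y})"
    have fin: "finite (L ` {i. i < n \<and> L i \<le> y})" by simp
    have y'in: "y' \<in> L ` {i. i < n \<and> L i \<le> y}" unfolding y'_def using ne fin by (intro Max_in) auto
    then have y'y: "y' \<le> y" by auto
    have "{i. i < n \<and> L i \<le> y} \<subseteq> {i. i < n \<and> L i \<le> y'}"
      using fin by (auto simp: y'_def intro: Max_ge)
    then have "card {i. i < n \<and> L i \<le> y} \<le> card {i. i < n \<and> L i \<le> y'}"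
      by (intro card_mono) auto
    then have "?F y \<le> ?F y'" unfolding emp_cdf_def by (intro divide_right_mono) auto
    then have "y' \<in> C" using y y'in by (auto simp: C_def S_def)
    with y'y show ?thesis by blast
  qed
  have "?F (Max (L ` {..<n})) \<ge> \<alpha>"
  proof -
    have "{i. i < n \<and> L i \<le> Max (L ` {..<n})} = {..<n}" by auto
    then have "?F (Max (L ` {..<n})) = 1" using n by (simp add: emp_cdf_def)
    then show ?thesis using \<alpha> by simp
  qed
  then have "Max (L ` {..<n}) \<in> C" using n by (auto simp: C_def intro!: Max_in)
  then have Cne: "C \<noteq> {}" by auto
  define y0 where "y0 = Min C"
  have y0C: "y0 \<in> C" unfolding y0_def using Cfin Cne by (rule Min_in)
  have y0S: "y0 \<in> S" using y0C by (auto simp: C_def S_def)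
  have y0le: "y0 \<le> y" if "y \<in> S" for y
    using dom[OF that] Cfin by (auto simp: y0_def intro: Min_le order_trans)
  have vhat: "Inf S = y0"
    by (rule cInf_eq_minimum[OF y0S y0le])
  have Fy0: "?F y0 \<ge> \<alpha>" using y0S by (simp add: S_def)
  have lt: "real (card {i. i < n \<and> L i < y0}) / real n < \<alpha>"
  proof (rule ccontr)
    assume h: "\<not> ?thesis"
    have "card {i. i < n \<and> L i < y0} > 0"
    proof (rule ccontr)
      assume "\<not> card {i. i < n \<and> L i < y0} > 0"
      then have "card {i. i < n \<and> L i < y0} = 0" by simp
      with h \<alpha> show False by simp
    qed
    then have ne: "{i. i < n \<and> L i < y0} \<noteq> {}" using card_gt_0_iff by blast
    define y1 where "y1 = Max (L ` {i. i < n \<and> L i < y0})"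
    have fin: "finite (L ` {i. i < n \<and> L i < y0})" by simp
    have y1in: "y1 \<in> L ` {i. i < n \<and> L i < y0}" unfolding y1_def using ne fin by (intro Max_in) auto
    then have y1y0: "y1 < y0" by auto
    have "{i. i < n \<and> L i < y0} \<subseteq> {i. i < n \<and> L i \<le> y1}"
      using fin by (auto simp: y1_def intro: Max_ge)
    then have "real (card {i. i < n \<and> L i < y0}) / real n \<le> ?F y1"
      unfolding emp_cdf_def by (intro divide_right_mono) (auto intro!: card_mono)
    then have "y1 \<in> S" using h by (simp add: S_def)
    with y0le y1y0 show False by fastforce
  qed
  have split: "{i. i < n \<and> L i \<le> y0} = {i. i < n \<and> L i < y0} \<union> {i. i < n \<and> L i = y0}" by auto
  have "card {i. i < n \<and> L i \<le> y0} = card {i. i < n \<and> L i < y0} + card {i. i < n \<and> L i = y0}"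
    unfolding split by (rule card_Un_disjoint) auto
  then have "?F y0 = real (card {i. i < n \<and> L i < y0}) / real n + real (card {i. i < n \<and> L i = y0}) / real n"
    by (simp add: emp_cdf_def add_divide_distrib)
  also have "real (card {i. i < n \<and> L i = y0}) / real n \<le> real B / real n"
    using mult[of y0] by (intro divide_right_mono) auto
  finally have up: "?F y0 \<le> \<alpha> + real B / real n" using lt by linarith
  show ?thesis
  proof (cases "?F v \<ge> \<alpha>")
    case True
    then have "y0 \<le> v" using y0le by (simp add: S_def)
    then have "?F y0 \<le> ?F v" by (rule emp_cdf_mono)
    moreover have "0 \<le> real B / real n" by simp
    ultimately show ?thesis unfolding vhat[unfolded S_def] using Fy0 True by linarith
  next
    case False
    then show ?thesis unfolding vhat[unfolded S_def] using Fy0 up by linarith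
  qed
qed

theorem lemma1:
  fixes \<alpha> :: real and b t m :: nat and \<Theta> :: "real set"
    and g :: "real \<Rightarrow> real^'d::finite \<Rightarrow> real"
    and \<theta> :: real and u :: "nat \<Rightarrow> real^'d"
  assumes alpha: "0 < \<alpha>" "\<alpha> < 1"
    and b: "b \<ge> 2"
    and tm: "t \<le> m"
    and meas: "\<And>\<theta>. \<theta> \<in> \<Theta> \<Longrightarrow>
       (\<lambda>x. indicator (box 0 1) x * g \<theta> x) \<in> borel_measurable lborel"
    and cont: "\<And>\<theta> x j a c y. \<theta> \<in> \<Theta> \<Longrightarrow> x \<in> box 0 1 \<Longrightarrow> 0 \<le> a \<Longrightarrow> a < c \<Longrightarrow> c \<le> 1 \<Longrightarrow>
       emeasure lborel {s \<in> {a<..<c}. g \<theta> (\<chi> k. if k = j then s else x $ k) = y} = 0"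
    and theta: "\<theta> \<in> \<Theta>"
    and net: "is_tmd_net b t m u"
  shows
    "let n = b ^ m;
         v = Inf {y. measure lborel ({x. g \<theta> x \<le> y} \<inter> box 0 1) \<ge> \<alpha>}
     in AE \<sigma> in scramble_space b.
          (let L = (\<lambda>i. g \<theta> (scramble_point b \<sigma> (u i)));
               F = emp_cdf n L;
               vhat = Inf {y. F y \<ge> \<alpha>}
           in \<bar>F vhat - F v\<bar> \<le> real b ^ t / real n + \<bar>F v - \<alpha>\<bar>)"
proof -
  have b2: "2 \<le> b" using b by simp
  define n where "n = b ^ m"
  have n0: "0 < n" using b by (simp add: n_def)
  have SS: "scramble_space b = Om b" by (simp add: scramble_space_def Perms_def)
  have Gm: "(\<lambda>z. indicator (box 0 1) z * g \<theta> z) \<in> borel_measurable borel"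
    using meas[OF theta] by simp
  have cont': "emeasure lborel {s \<in> {0<..<1}. g \<theta> (\<chi> k. if k = j then s else z $ k) = y'} = 0"
    if "z \<in> box 0 1" for z j y'
    using that by (intro cont[OF theta]) auto
  have u01: "0 \<le> u i $ j \<and> u i $ j < 1" if "i < n" for i j
    using net that unfolding is_tmd_net_def n_def by blast
  let ?P = "\<lambda>\<sigma> i l. u i \<noteq> u l \<longrightarrow> g \<theta> (scramble_point b \<sigma> (u i)) \<noteq> g \<theta> (scramble_point b \<sigma> (u l))"
  have AE1: "AE \<sigma> in Om b. ?P \<sigma> i l" if "i < n" "l < n" for i l
  proof (cases "u i = u l")
    case True then show ?thesis by simp
  next
    case False
    have "AE \<sigma> in Om b. g \<theta> (scramble_point b \<sigma> (u i)) \<noteq> g \<theta> (scramble_point b \<sigma> (u l))"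
      by (rule AE_ne[OF b2 Gm cont' u01[OF that(1)] u01[OF that(2)] False])
    then show ?thesis by (rule eventually_mono) simp
  qed
  have AEall: "AE \<sigma> in Om b. \<forall>i\<in>{..<n}. \<forall>l\<in>{..<n}. ?P \<sigma> i l"
  proof (rule AE_finite_allI)
    fix i assume i: "i \<in> {..<n}"
    show "AE \<sigma> in Om b. \<forall>l\<in>{..<n}. ?P \<sigma> i l"
    proof (rule AE_finite_allI)
      fix l assume l: "l \<in> {..<n}"
      show "AE \<sigma> in Om b. ?P \<sigma> i l" using AE1 i l by simp
    qed simp
  qed simp
  have final: "\<bar>emp_cdf n (\<lambda>i. g \<theta> (scramble_point b \<sigma> (u i)))
        (Inf {y. \<alpha> \<le> emp_cdf n (\<lambda>i. g \<theta> (scramble_point b \<sigma> (u i))) y})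
      - emp_cdf n (\<lambda>i. g \<theta> (scramble_point b \<sigma> (u i))) V\<bar>
      \<le> real b ^ t / real n + \<bar>emp_cdf n (\<lambda>i. g \<theta> (scramble_point b \<sigma> (u i))) V - \<alpha>\<bar>"
    if H: "\<forall>i\<in>{..<n}. \<forall>l\<in>{..<n}. ?P \<sigma> i l" for \<sigma> V
  proof -
    let ?L = "\<lambda>i. g \<theta> (scramble_point b \<sigma> (u i))"
    have mult: "card {i. i < n \<and> ?L i = y} \<le> b ^ t" for y
    proof (cases "{i. i < n \<and> ?L i = y} = {}")
      case True then show ?thesis by (simp only: True card.empty)
    next
      case False
      then obtain i0 where i0: "i0 < n" "?L i0 = y" by auto
      have "{i. i < n \<and> ?L i = y} \<subseteq> {i. i < b ^ m \<and> u i = u i0}"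
        using H i0 by (auto simp: n_def)
      then have "card {i. i < n \<and> ?L i = y} \<le> card {i. i < b ^ m \<and> u i = u i0}"
        by (intro card_mono) auto
      also have "\<dots> \<le> b ^ t"
        by (rule net_mult[OF net b2]) (use i0 in \<open>simp add: n_def\<close>)
      finally show ?thesis .
    qed
    show ?thesis using quantile_bound[OF n0 alpha mult, of V] by simp
  qed
  show ?thesis
    unfolding Let_def SS n_def[symmetric]
    using AEall by (rule eventually_mono) (rule final)
qed

end
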